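(* Let $\mathcal{T}$ be a locally compact, $\sigma$-compact Hausdorff space, $\mu$ a finite positive Radon measure on $\mathcal{T}$ with $\mu(\mathcal{T})>0$, $1\le p<\infty$ with conjugate $q$. For $\varepsilon>1$ let $S_\varepsilon^p=\{f\in L^q_\mu(\mathcal{T})\text{ real}:\|f\|_q\le\varepsilon,\ \int f\,d\mu=\mu(\mathcal{T})^{1/p}\}$ and $L^p(\mathcal{T})_\varepsilon^+=\{g\in L^p_\mu(\mathcal{T})\text{ real}:\int gf\,d\mu\ge0\ \forall f\in S_\varepsilon^p\}$, and let $L^p(\mathcal{T})_+$ be the $\mu$-a.e. nonnegative functions. If $L^p(\mathcal{T})_+\subseteq L^p(\mathcal{T})_\varepsilon^+$ for some $\varepsilon>1$, then $r_\mu=\inf\{\mu(E):E\ \mu\text{-measurable},\ \mu(E)>0\}>0$. *)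

theory Defs
  imports "HOL-Analysis.Analysis" "HOL-Probability.Essential_Supremum"
begin

definition sigma_compact_space :: "'a topology \<Rightarrow> bool" where
  "sigma_compact_space X \<longleftrightarrow>
     (\<exists>K. countable K \<and> (\<forall>k\<in>K. compactin X k) \<and> \<Union>K = topspace X)"

definition radon_measure :: "'a topology \<Rightarrow> 'a measure \<Rightarrow> bool" where
  "radon_measure X M \<longleftrightarrow>
     space M = topspace X \<and>
     (\<forall>U. openin X U \<longrightarrow> U \<in> sets M) \<and>
     (\<forall>K. compactin X K \<longrightarrow> emeasure M K < \<infinity>) \<and>
     (\<forall>E\<in>sets M. emeasure M E = (INF U\<in>{U. openin X U \<and> E \<subseteq> U}. emeasure M U)) \<and>
     (\<forall>U. openin X U \<longrightarrow> emeasure M U = (SUP K\<in>{K. compactin X K \<and> K \<subseteq> U}. emeasure M K))"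

definition conj_exp :: "real \<Rightarrow> ereal" where
  "conj_exp p = (if p = 1 then \<infinity> else ereal (p / (p - 1)))"

definition lp_mem :: "'a measure \<Rightarrow> ereal \<Rightarrow> ('a \<Rightarrow> real) \<Rightarrow> bool" where
  "lp_mem M r f \<longleftrightarrow> f \<in> borel_measurable M \<and>
     (if r = \<infinity> then esssup M (\<lambda>x. ereal \<bar>f x\<bar>) < \<infinity>
      else integrable M (\<lambda>x. \<bar>f x\<bar> powr real_of_ereal r))"

definition lp_norm :: "'a measure \<Rightarrow> ereal \<Rightarrow> ('a \<Rightarrow> real) \<Rightarrow> ereal" where
  "lp_norm M r f = (if r = \<infinity> then esssup M (\<lambda>x. ereal \<bar>f x\<bar>)
     else ereal ((\<integral>x. \<bar>f x\<bar> powr real_of_ereal r \<partial>M) powr (1 / real_of_ereal r)))"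

definition S_eps :: "'a measure \<Rightarrow> real \<Rightarrow> real \<Rightarrow> ('a \<Rightarrow> real) set" where
  "S_eps M p \<epsilon> = {f. lp_mem M (conj_exp p) f \<and> lp_norm M (conj_exp p) f \<le> ereal \<epsilon> \<and>
                     (\<integral>x. f x \<partial>M) = measure M (space M) powr (1 / p)}"

definition Lp_pos :: "'a measure \<Rightarrow> real \<Rightarrow> ('a \<Rightarrow> real) set" where
  "Lp_pos M p = {g. lp_mem M (ereal p) g \<and> (AE x in M. g x \<ge> 0)}"

definition Lp_eps_pos :: "'a measure \<Rightarrow> real \<Rightarrow> real \<Rightarrow> ('a \<Rightarrow> real) set" where
  "Lp_eps_pos M p \<epsilon> = {g. lp_mem M (ereal p) g \<and> (\<forall>f\<in>S_eps M p \<epsilon>. (\<integral>x. g x * f x \<partial>M) \<ge> 0)}"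

end

theory Submission
  imports Defs
begin

theorem lemma5p4:
  fixes X :: "'a topology" and M :: "'a measure" and p \<epsilon> :: real
  assumes "locally_compact_space X" and "Hausdorff_space X" and "sigma_compact_space X"
    and "radon_measure X M" and "finite_measure M" and "emeasure M (space M) > 0"
    and "1 \<le> p"
    and "\<epsilon> > 1" and "Lp_pos M p \<subseteq> Lp_eps_pos M p \<epsilon>"
  shows "(INF E\<in>{E\<in>sets M. emeasure M E > 0}. emeasure M E) > 0"
proof (rule ccontr)
  assume "\<not> ?thesis"
  then have inf0: "(INF E\<in>{E\<in>sets M. emeasure M E > 0}. emeasure M E) = 0"
    by (simp add: not_gr_zero)
  interpret finite_measure M by fact
  define m where "m = measure M (space M)"
  have m0: "m > 0" using assms(6) by (simp add: m_def emeasure_eq_measure)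
  define \<delta> where "\<delta> = m*(\<epsilon>-1)/(\<epsilon>+1)"
  have d0: "\<delta> > 0" using m0 assms(8) by (simp add: \<delta>_def)
  have "(INF E\<in>{E\<in>sets M. emeasure M E > 0}. emeasure M E) < ennreal \<delta>"
    using inf0 d0 by simp
  then obtain E where E: "E \<in> sets M" "emeasure M E > 0" "emeasure M E < ennreal \<delta>"
    by (auto simp: INF_less_iff)
  define a where "a = measure M E"
  have a0: "a > 0" and ad: "a < \<delta>" using E d0
    by (auto simp: a_def emeasure_eq_measure ennreal_less_iff)
  have dm: "\<delta> < m" using m0 assms(8) by (simp add: \<delta>_def field_simps)
  have am: "a < m" using ad dm by simp
  have ad2: "a * (1 + \<epsilon>) \<le> m * (\<epsilon> - 1)"
    using ad assms(8) by (simp add: \<delta>_def field_simps)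
  define s where "s = (if p = 1 then 1 else m powr ((p-1)/p))"
  have s0: "s > 0" using m0 by (simp add: s_def)
  have ms: "m powr (1/p) * s = m"
  proof (cases "p = 1")
    case True then show ?thesis using m0 by (simp add: s_def)
  next
    case False
    have "m powr (1/p) * s = m powr (1/p + (p-1)/p)"
      using False by (simp add: s_def powr_add)
    also have "1/p + (p-1)/p = 1" using assms(7) by (simp add: field_simps)
    finally show ?thesis using m0 by simp
  qed
  define \<beta> where "\<beta> = 1/s"
  define \<alpha> where "\<alpha> = (m powr (1/p) + \<beta>*a)/(m-a)"
  have b0: "\<beta> > 0" using s0 by (simp add: \<beta>_def)
  have al0: "\<alpha> > 0" using am a0 b0 m0 by (simp add: \<alpha>_def add_pos_nonneg)
  have als: "\<alpha> * s = (m + a)/(m - a)"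
    using s0 am ms by (simp add: \<alpha>_def \<beta>_def field_simps)
  have als_le: "\<alpha> * s \<le> \<epsilon>"
    unfolding als using am ad2 by (simp add: field_simps)
  have bs_le: "\<beta> * s \<le> \<epsilon>" using s0 assms(8) by (simp add: \<beta>_def)
  define f where "f x = (if x \<in> E then -\<beta> else \<alpha>)" for x
  define g where "g = (indicator E :: 'a \<Rightarrow> real)"
  have fm: "f \<in> borel_measurable M" unfolding f_def using E(1) by measurable
  have gpos: "g \<in> Lp_pos M p"
  proof -
    have "(\<lambda>x. \<bar>g x\<bar> powr real_of_ereal (ereal p)) = indicator E"
      using assms(7) by (auto simp: g_def indicator_def fun_eq_iff)
    then show ?thesis using E(1)
      by (auto simp: Lp_pos_def lp_mem_def g_def emeasure_eq_measure intro!: integrable_real_indicator)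
  qed
  have fS: "f \<in> S_eps M p \<epsilon>"
  proof -
    have feq: "f = (\<lambda>x. \<alpha> - (\<alpha> + \<beta>) * indicator E x)"
      by (auto simp: f_def fun_eq_iff indicator_def)
    have "(\<integral>x. f x \<partial>M) = \<alpha> * m - (\<alpha> + \<beta>) * a"
      unfolding feq using E(1)
      by (subst Bochner_Integration.integral_diff) (auto simp: m_def a_def emeasure_eq_measure intro!: integrable_mult_right)
    also have "\<dots> = \<alpha> * (m - a) - \<beta> * a" by (simp add: algebra_simps)
    also have "\<dots> = m powr (1/p)" using am by (simp add: \<alpha>_def)
    finally have int: "(\<integral>x. f x \<partial>M) = measure M (space M) powr (1/p)" by (simp add: m_def)
    have fb: "\<bar>f x\<bar> \<le> max \<alpha> \<beta>" for x using al0 b0 by (auto simp: f_def)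
    show ?thesis
    proof (cases "p = 1")
      case True
      have ae: "AE x in M. ereal \<bar>f x\<bar> \<le> ereal (max \<alpha> \<beta>)"
        by (rule AE_I2) (simp only: ereal_less_eq(3) fb)
      have fme: "(\<lambda>x. ereal \<bar>f x\<bar>) \<in> borel_measurable M" using fm by measurable
      have "esssup M (\<lambda>x. ereal \<bar>f x\<bar>) \<le> ereal (max \<alpha> \<beta>)"
        by (rule esssup_I[OF fme ae])
      moreover have "max \<alpha> \<beta> \<le> \<epsilon>" using als_le bs_le True by (simp add: s_def)
      ultimately have n: "esssup M (\<lambda>x. ereal \<bar>f x\<bar>) \<le> ereal \<epsilon>"
        by (meson ereal_less_eq(3) order_trans)
      then show ?thesis using True fm int
        by (auto simp: S_eps_def lp_mem_def lp_norm_def conj_exp_def)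
    next
      case False
      define r where "r = p / (p - 1)"
      have r0: "r > 0" using False assms(7) by (simp add: r_def)
      have ce: "conj_exp p = ereal r" using False by (simp add: conj_exp_def r_def)
      have frb: "\<bar>f x\<bar> powr r \<le> max \<alpha> \<beta> powr r" for x
        by (rule powr_mono2) (use r0 fb in auto)
      have fr_int: "integrable M (\<lambda>x. \<bar>f x\<bar> powr r)"
        using fm by (intro integrable_const_bound[where B="max \<alpha> \<beta> powr r"] AE_I2)
          (auto simp: frb)
      have "(\<integral>x. \<bar>f x\<bar> powr r \<partial>M) \<le> (\<integral>x. max \<alpha> \<beta> powr r \<partial>M)"
        using fr_int by (intro integral_mono) (auto simp: frb)
      also have "\<dots> = max \<alpha> \<beta> powr r * m" by (simp add: m_def)
      finally have I: "(\<integral>x. \<bar>f x\<bar> powr r \<partial>M) \<le> max \<alpha> \<beta> powr r * m" .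
      have "(\<integral>x. \<bar>f x\<bar> powr r \<partial>M) powr (1/r) \<le> (max \<alpha> \<beta> powr r * m) powr (1/r)"
        using I r0 by (intro powr_mono2) auto
      also have "\<dots> = max \<alpha> \<beta> * m powr (1/r)"
        using r0 m0 al0 by (simp add: powr_mult powr_powr)
      also have "m powr (1/r) = s" using False by (simp add: s_def r_def)
      also have "max \<alpha> \<beta> * s \<le> \<epsilon>" using als_le bs_le by (simp add: max_def)
      finally have "(\<integral>x. \<bar>f x\<bar> powr r \<partial>M) powr (1/r) \<le> \<epsilon>" .
      then show ?thesis using fm int fr_int
        by (auto simp: S_eps_def lp_mem_def lp_norm_def ce)
    qed
  qed
  have "f \<in> S_eps M p \<epsilon>" by fact
  moreover have "g \<in> Lp_eps_pos M p \<epsilon>" using gpos assms(9) by blast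
  ultimately have ge: "(\<integral>x. g x * f x \<partial>M) \<ge> 0" by (auto simp: Lp_eps_pos_def)
  have "(\<lambda>x. g x * f x) = (\<lambda>x. indicator E x * (-\<beta>))"
    by (auto simp: g_def f_def fun_eq_iff indicator_def)
  then have "(\<integral>x. g x * f x \<partial>M) = - (a * \<beta>)"
    using E(1) by (simp add: a_def)
  then show False using ge a0 b0 mult_pos_pos[OF a0 b0] by simp
qed

end
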